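(* Let $\hat{c}_1,\dots,\hat{c}_n$ be Majorana operators, i.e. $\hat{c}_i^\dagger=\hat{c}_i$ and $\{\hat{c}_i,\hat{c}_j\}=2\delta_{ij}$, and let $$\hat{H}=\sum_{i<j}t_{ij}\,i\,\hat{c}_i\hat{c}_j+\sum_{i<j<k<l}U_{ijkl}\,\hat{c}_i\hat{c}_j\hat{c}_k\hat{c}_l,$$ where $t_{ij}$ and $U_{ijkl}$ are real and are extended to all index tuples as totally antisymmetric arrays. For fixed $m$, let $(c_{im}(t))_{i}$ be the solution of $$\dot{c}_{im}(t)=2\sum_{\substack{j<k<l}}|U_{ijkl}|\,[c_{jm}(t)+c_{km}(t)+c_{lm}(t)]+2\sum_j|t_{ij}|\,c_{jm}(t),\qquad c_{im}(0)=2\delta_{im},$$ where the first sum runs over triples $j<k<l$ of indices (all different from $i$). Then for all $t\ge 0$ and all $i,m$, $$\|\{\hat{c}_i(t),\hat{c}_m\}\|\le c_{im}(t),$$ where $\hat{c}_i(t)=e^{i\hat{H}t}\hat{c}_ie^{-i\hat{H}t}$ and $\|\cdot\|$ is the operator norm.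
   Context: $\{\cdot,\cdot\}$ denotes the anticommutator. *)

theory Defs
  imports "HOL-Analysis.Analysis"
begin

text \<open>Operators on a finite-dimensional complex Hilbert space complex^'d are
  represented by complex matrices complex^'d^'d.\<close>

definition cadj :: "complex^'d^'d \<Rightarrow> complex^'d^'d" where
  "cadj A = (\<chi> i j. cnj (A $ j $ i))"

definition msc :: "complex \<Rightarrow> complex^'d^'d \<Rightarrow> complex^'d^'d" where
  "msc a A = (\<chi> i j. a * A $ i $ j)"

definition mpow :: "complex^'d^'d \<Rightarrow> nat \<Rightarrow> complex^'d^'d" where
  "mpow A k = (((**) A) ^^ k) (mat 1)"

definition mexp :: "complex^'d^'d \<Rightarrow> complex^'d^'d" where
  "mexp A = (\<Sum>k. (1 / fact k) *\<^sub>R mpow A k)"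

definition opnorm :: "complex^'d^'d \<Rightarrow> real" where
  "opnorm A = onorm (\<lambda>x. A *v x)"

definition anticomm :: "complex^'d^'d \<Rightarrow> complex^'d^'d \<Rightarrow> complex^'d^'d" where
  "anticomm A B = A ** B + B ** A"

definition majorana :: "nat \<Rightarrow> (nat \<Rightarrow> complex^'d^'d) \<Rightarrow> bool" where
  "majorana n c \<longleftrightarrow> (\<forall>i<n. cadj (c i) = c i) \<and>
     (\<forall>i<n. \<forall>j<n. anticomm (c i) (c j) = (if i = j then mat 2 else 0))"

definition hamiltonian :: "nat \<Rightarrow> (nat \<Rightarrow> complex^'d^'d) \<Rightarrow> (nat \<Rightarrow> nat \<Rightarrow> real)
     \<Rightarrow> (nat \<Rightarrow> nat \<Rightarrow> nat \<Rightarrow> nat \<Rightarrow> real) \<Rightarrow> complex^'d^'d" where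
  "hamiltonian n c t U =
     (\<Sum>(i,j)\<in>{(i,j). i < j \<and> j < n}. msc (complex_of_real (t i j) * \<i>) (c i ** c j))
   + (\<Sum>(i,j,k,l)\<in>{(i,j,k,l). i < j \<and> j < k \<and> k < l \<and> l < n}.
        msc (complex_of_real (U i j k l)) (c i ** c j ** c k ** c l))"

definition heis :: "complex^'d^'d \<Rightarrow> real \<Rightarrow> complex^'d^'d \<Rightarrow> complex^'d^'d" where
  "heis H s A = mexp (msc (\<i> * complex_of_real s) H) ** A ** mexp (msc (- \<i> * complex_of_real s) H)"

definition antisym2 :: "(nat \<Rightarrow> nat \<Rightarrow> real) \<Rightarrow> bool" where
  "antisym2 t \<longleftrightarrow> (\<forall>i j. t i j = - t j i)"

definition antisym4 :: "(nat \<Rightarrow> nat \<Rightarrow> nat \<Rightarrow> nat \<Rightarrow> real) \<Rightarrow> bool" where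
  "antisym4 U \<longleftrightarrow> (\<forall>i j k l. U i j k l = - U j i k l \<and> U i j k l = - U i k j l
      \<and> U i j k l = - U i j l k)"

end

theory Submission
  imports Defs
begin

typedef (overloaded) ('d::finite) mop = "UNIV :: ((complex^'d) \<Rightarrow>\<^sub>L (complex^'d)) set"
  morphisms ap mk by auto

setup_lifting type_definition_mop

instantiation mop :: (finite) real_normed_vector
begin
lift_definition norm_mop :: "'a mop \<Rightarrow> real" is norm .
lift_definition minus_mop :: "'a mop \<Rightarrow> 'a mop \<Rightarrow> 'a mop" is "(-)" .
lift_definition plus_mop :: "'a mop \<Rightarrow> 'a mop \<Rightarrow> 'a mop" is "(+)" .
lift_definition uminus_mop :: "'a mop \<Rightarrow> 'a mop" is "uminus" .
lift_definition zero_mop :: "'a mop" is "0" .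
lift_definition scaleR_mop :: "real \<Rightarrow> 'a mop \<Rightarrow> 'a mop" is "scaleR" .
definition dist_mop :: "'a mop \<Rightarrow> 'a mop \<Rightarrow> real" where "dist_mop a b = norm (a - b)"
definition sgn_mop :: "'a mop \<Rightarrow> 'a mop" where "sgn_mop x = scaleR (inverse (norm x)) x"
definition uniformity_mop :: "('a mop \<times> 'a mop) filter" where
  "uniformity_mop = (INF e\<in>{0 <..}. principal {(x, y). dist x y < e})"
definition open_mop :: "'a mop set \<Rightarrow> bool" where
  "open_mop S = (\<forall>x\<in>S. \<forall>\<^sub>F (x', y) in uniformity. x' = x \<longrightarrow> y \<in> S)"
instance
  apply standard
  unfolding dist_mop_def open_mop_def sgn_mop_def uniformity_mop_def
  apply (rule refl | (transfer, force simp: norm_triangle_ineq algebra_simps))+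
  done
end

instantiation mop :: (finite) real_normed_algebra_1
begin
lift_definition times_mop :: "'a mop \<Rightarrow> 'a mop \<Rightarrow> 'a mop" is "blinfun_compose" .
lift_definition one_mop :: "'a mop" is "id_blinfun" .
instance
proof
  show "(0::'a mop) \<noteq> 1"
  proof
    assume "(0::'a mop) = 1"
    then have "norm (0::'a mop) = norm (1::'a mop)" by simp
    then show False by transfer simp
  qed
qed (transfer; auto intro!: blinfun_eqI simp: blinfun.bilinear_simps norm_blinfun_compose)+
end

instance mop :: (finite) banach
proof
  fix X :: "nat \<Rightarrow> 'a mop"
  assume "Cauchy X"
  then have "Cauchy (\<lambda>n. ap (X n))"
    unfolding Cauchy_def dist_mop_def dist_norm by transfer
  then obtain L where L: "(\<lambda>n. ap (X n)) \<longlonglongrightarrow> L" using convergent_def Cauchy_convergent_iff by blast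
  have "X \<longlonglongrightarrow> mk L"
    using L unfolding LIMSEQ_def dist_mop_def dist_norm
    by (simp add: minus_mop.rep_eq norm_mop.rep_eq mk_inverse)
  then show "convergent X" by (auto simp: convergent_def)
qed

definition app :: "'d::finite mop \<Rightarrow> complex^'d \<Rightarrow> complex^'d" where
  "app A v = blinfun_apply (ap A) v"

lemma app_times: "app (A * B) v = app A (app B v)"
  unfolding app_def by (simp add: times_mop.rep_eq)
lemma app_plus: "app (A + B) v = app A v + app B v"
  unfolding app_def by (simp add: plus_mop.rep_eq blinfun.bilinear_simps)
lemma app_minus: "app (A - B) v = app A v - app B v"
  unfolding app_def by (simp add: minus_mop.rep_eq blinfun.bilinear_simps)
lemma app_uminus: "app (- A) v = - app A v"
  unfolding app_def by (simp add: uminus_mop.rep_eq blinfun.bilinear_simps)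
lemma app_scaleR: "app (r *\<^sub>R A) v = r *\<^sub>R app A v"
  unfolding app_def by (simp add: scaleR_mop.rep_eq blinfun.bilinear_simps)
lemma app_zero: "app 0 v = 0"
  unfolding app_def by (simp add: zero_mop.rep_eq)
lemma app_one: "app 1 v = v"
  unfolding app_def by (simp add: one_mop.rep_eq)
lemma app_sum: "app (sum f S) v = (\<Sum>x\<in>S. app (f x) v)"
  by (induction S rule: infinite_finite_induct) (auto simp: app_zero app_plus)
lemma app_add_right: "app A (v + w) = app A v + app A w"
  unfolding app_def by (simp add: blinfun.bilinear_simps)
lemma app_scaleR_right: "app A (r *\<^sub>R v) = r *\<^sub>R app A v"
  unfolding app_def by (simp add: blinfun.bilinear_simps)
lemma app_minus_right: "app A (- v) = - app A v"
  unfolding app_def by (simp add: blinfun.bilinear_simps)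
lemma app_diff_right: "app A (v - w) = app A v - app A w"
  unfolding app_def by (simp add: blinfun.bilinear_simps)
lemma app_zero_right: "app A 0 = 0"
  unfolding app_def by (simp add: blinfun.bilinear_simps)
lemma norm_app: "norm (app A v) \<le> norm A * norm v"
  unfolding app_def by (simp add: norm_mop.rep_eq norm_blinfun)
lemma norm_mop_bound: "0 \<le> b \<Longrightarrow> (\<And>v. norm (app A v) \<le> b * norm v) \<Longrightarrow> norm A \<le> b"
  unfolding app_def norm_mop.rep_eq by (rule norm_blinfun_bound)
lemma mop_eqI: "(\<And>v. app A v = app B v) \<Longrightarrow> A = B"
  unfolding app_def by (metis ap_inject blinfun_eqI)
lemma bounded_linear_app_left: "bounded_linear (\<lambda>A. app A v)"
proof
  show "app (A + B) v = app A v + app B v" for A B by (rule app_plus)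
  show "app (r *\<^sub>R A) v = r *\<^sub>R app A v" for r A by (rule app_scaleR)
  show "\<exists>K. \<forall>A. norm (app A v) \<le> norm A * K"
    using norm_app by (metis mult.commute mult.left_commute mult_1)
qed
lemma bounded_linear_app_right: "bounded_linear (\<lambda>v. app A v)"
  unfolding app_def by (simp add: blinfun.bounded_linear_right)

definition Phi :: "complex^'d^'d \<Rightarrow> 'd::finite mop" where
  "Phi A = mk (Blinfun (\<lambda>x. A *v x))"

lemma app_Phi: "app (Phi A) v = A *v v"
  unfolding app_def Phi_def
  by (simp add: mk_inverse bounded_linear_Blinfun_apply)

lemma Phi_mult: "Phi (A ** B) = Phi A * Phi B"
  by (rule mop_eqI) (simp add: app_Phi app_times matrix_vector_mul_assoc)
lemma Phi_one: "Phi (mat 1) = 1"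
  by (rule mop_eqI) (simp add: app_Phi app_one)
lemma Phi_plus: "Phi (A + B) = Phi A + Phi B"
  by (rule mop_eqI) (simp add: app_Phi app_plus matrix_vector_mult_add_rdistrib)
lemma Phi_minus: "Phi (A - B) = Phi A - Phi B"
  by (rule mop_eqI) (simp add: app_Phi app_minus matrix_vector_mult_diff_rdistrib)
lemma Phi_scaleR: "Phi (r *\<^sub>R A) = r *\<^sub>R Phi A"
  by (rule mop_eqI) (simp add: app_Phi app_scaleR vec_eq_iff matrix_vector_mult_def scaleR_sum_right mult_scaleR_left)
lemma Phi_zero: "Phi 0 = 0"
  by (rule mop_eqI) (simp add: app_Phi app_zero)
lemma Phi_sum: "Phi (sum f S) = (\<Sum>x\<in>S. Phi (f x))"
  by (induction S rule: infinite_finite_induct) (auto simp: Phi_zero Phi_plus)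

lemma linear_Phi: "linear Phi"
  by (rule linearI) (auto simp: Phi_plus Phi_scaleR)
lemma bounded_linear_Phi: "bounded_linear Phi"
  using linear_Phi linear_conv_bounded_linear by blast

lemma opnorm_Phi: "opnorm A = norm (Phi A)"
  unfolding opnorm_def Phi_def norm_mop.rep_eq
  by (simp add: mk_inverse norm_blinfun.rep_eq bounded_linear_Blinfun_apply)

lemma norm_vec_le_sum: "norm (x :: 'a::real_normed_vector^'n) \<le> (\<Sum>i\<in>UNIV. norm (x $ i))"
  by (simp add: norm_vec_def L2_set_le_sum)

definition Psi :: "'d::finite mop \<Rightarrow> complex^'d^'d" where
  "Psi f = (\<chi> i j. (app f (axis j 1)) $ i)"

lemma Psi_scaleR: "Psi (r *\<^sub>R A) = r *\<^sub>R Psi A"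
  unfolding Psi_def by (simp add: vec_eq_iff app_scaleR)

lemma bounded_linear_Psi: "bounded_linear (Psi :: 'd::finite mop \<Rightarrow> _)"
proof -
  have 1: "Psi (A + B) = Psi A + Psi B" for A B :: "'d mop"
    unfolding Psi_def by (simp add: vec_eq_iff app_plus)
  have 2: "Psi (r *\<^sub>R A) = r *\<^sub>R Psi A" for r and A :: "'d mop"
    unfolding Psi_def by (simp add: vec_eq_iff app_scaleR)
  define K0 where "K0 = (\<Sum>i\<in>(UNIV::'d set). \<Sum>j\<in>(UNIV::'d set). norm (axis j (1::complex)))"
  have 3: "norm (Psi A) \<le> norm A * K0" for A :: "'d mop"
  proof -
    have "norm (Psi A) \<le> (\<Sum>i\<in>UNIV. norm (Psi A $ i))" by (rule norm_vec_le_sum)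
    also have "\<dots> \<le> (\<Sum>i\<in>UNIV. \<Sum>j\<in>UNIV. norm (Psi A $ i $ j))"
      by (intro sum_mono norm_vec_le_sum)
    also have "\<dots> \<le> (\<Sum>i\<in>(UNIV::'d set). \<Sum>j\<in>(UNIV::'d set). norm A * norm (axis j (1::complex)))"
    proof (intro sum_mono)
      fix i j :: 'd
      have "norm (Psi A $ i $ j) = norm (app A (axis j 1) $ i)" unfolding Psi_def by simp
      also have "\<dots> \<le> norm (app A (axis j 1))" by (rule Finite_Cartesian_Product.norm_nth_le)
      also have "\<dots> \<le> norm A * norm (axis j (1::complex))" by (rule norm_app)
      finally show "norm (Psi A $ i $ j) \<le> norm A * norm (axis j (1::complex))" .
    qed
    also have "\<dots> = norm A * K0" unfolding K0_def
      by (simp add: sum_distrib_left)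
    finally show ?thesis .
  qed
  show ?thesis by (rule bounded_linear_intro[OF 1 2 3])
qed

lemma Psi_Phi: "Psi (Phi A) = A"
proof -
  have "(A *v axis j 1) $ i = A $ i $ j" for i j
    unfolding matrix_vector_mult_def axis_def
    by (simp add: if_distrib[where f="\<lambda>x. _ * x"] sum.delta' cong: if_cong)
  then show ?thesis unfolding Psi_def by (simp add: vec_eq_iff app_Phi)
qed

lemma mpow_Suc: "mpow A (Suc k) = A ** mpow A k"
  unfolding mpow_def by simp

lemma Phi_mpow: "Phi (mpow A k) = Phi A ^ k"
  by (induction k) (simp_all add: mpow_def Phi_one Phi_mult)

lemma Phi_mexp: "Phi (mexp A) = exp (Phi A)"
proof -
  have eq: "(1 / fact k) *\<^sub>R mpow A k = Psi (Phi A ^ k /\<^sub>R fact k)" for k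
    by (simp add: Psi_scaleR Psi_Phi Phi_mpow[symmetric] divide_inverse)
  have s1: "(\<lambda>k. Phi A ^ k /\<^sub>R fact k) sums exp (Phi A)"
    unfolding exp_def by (rule summable_sums[OF summable_exp_generic])
  have "(\<lambda>k. (1 / fact k) *\<^sub>R mpow A k) sums Psi (exp (Phi A))"
    unfolding eq by (rule bounded_linear.sums[OF bounded_linear_Psi s1])
  then have "(\<lambda>k. (1 / fact k) *\<^sub>R mpow A k) sums mexp A"
    unfolding mexp_def by (intro summable_sums sums_summable)
  then have "(\<lambda>k. Phi ((1 / fact k) *\<^sub>R mpow A k)) sums Phi (mexp A)"
    by (rule bounded_linear.sums[OF bounded_linear_Phi])
  moreover have "(\<lambda>k. Phi ((1 / fact k) *\<^sub>R mpow A k)) sums exp (Phi A)"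
    using s1 by (simp add: Phi_scaleR Phi_mpow divide_inverse_commute)
  ultimately show ?thesis using sums_unique2 by blast
qed

lemma comparison_eps:
  fixes X :: "real \<Rightarrow> nat \<Rightarrow> 'v::real_normed_vector" and X' :: "real \<Rightarrow> nat \<Rightarrow> 'v"
    and c :: "real \<Rightarrow> nat \<Rightarrow> real" and F :: "(nat \<Rightarrow> real) \<Rightarrow> nat \<Rightarrow> real"
  assumes dX: "\<And>s i. s \<ge> 0 \<Longrightarrow> i < n \<Longrightarrow> ((\<lambda>r. X r i) has_vector_derivative X' s i) (at s)"
  and bX: "\<And>s i. s \<ge> 0 \<Longrightarrow> i < n \<Longrightarrow> norm (X' s i) \<le> F (\<lambda>j. norm (X s j)) i"
  and dc: "\<And>s i. s \<ge> 0 \<Longrightarrow> i < n \<Longrightarrow> ((\<lambda>r. c r i) has_real_derivative F (c s) i) (at s within {0..})"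
  and init: "\<And>i. i < n \<Longrightarrow> norm (X 0 i) \<le> c 0 i"
  and mono: "\<And>y y' i. i < n \<Longrightarrow> (\<And>j. j < n \<Longrightarrow> y j \<le> y' j) \<Longrightarrow> F y i \<le> F y' i"
  and lin: "\<And>y e i. i < n \<Longrightarrow> F (\<lambda>j. y j + e) i = F y i + e * F (\<lambda>j. 1) i"
  and pos: "\<And>i. i < n \<Longrightarrow> F (\<lambda>j. 1) i \<ge> 0"
  and eps: "\<epsilon> > 0"
  shows "\<forall>s\<ge>0. \<forall>i<n. norm (X s i) < c s i + \<epsilon> * exp ((1 + (\<Sum>i<n. F (\<lambda>j. 1) i)) * s)"
proof (rule ccontr)
  define B where "B = 1 + (\<Sum>i<n. F (\<lambda>j. 1) i)"
  have B: "F (\<lambda>j. 1) i < B" if "i < n" for i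
  proof -
    have "F (\<lambda>j. 1) i \<le> (\<Sum>i<n. F (\<lambda>j. 1) i)"
      using that pos by (intro member_le_sum) auto
    then show ?thesis unfolding B_def by simp
  qed
  define z where "z s i = c s i + \<epsilon> * exp (B * s)" for s i
  define g where "g s i = z s i - norm (X s i)" for s i
  assume "\<not> (\<forall>s\<ge>0. \<forall>i<n. norm (X s i) < c s i + \<epsilon> * exp ((1 + (\<Sum>i<n. F (\<lambda>j. 1) i)) * s))"
  then obtain s0 i0 where s0: "s0 \<ge> 0" "i0 < n" "g s0 i0 \<le> 0"
    unfolding g_def z_def B_def by force
  have contc: "continuous_on {0..} (\<lambda>r. c r i)" if "i < n" for i
  proof -
    have "continuous (at s within {0..}) (\<lambda>r. c r i)" if "s \<in> {0..}" for s
      using dc[of s i] \<open>i < n\<close> that by (auto intro: DERIV_continuous)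
    then show ?thesis using continuous_on_eq_continuous_within by blast
  qed
  have contX: "continuous_on {0..} (\<lambda>r. X r i)" if "i < n" for i
  proof -
    have "continuous (at s within {0..}) (\<lambda>r. X r i)" if "s \<in> {0..}" for s
    proof -
      have "continuous (at s) (\<lambda>r. X r i)" using that \<open>i < n\<close>
        by (intro has_vector_derivative_continuous[OF dX[of s i]]) auto
      then show ?thesis by (rule continuous_at_imp_continuous_at_within)
    qed
    then show ?thesis using continuous_on_eq_continuous_within by blast
  qed
  have contg: "continuous_on {0..} (\<lambda>r. g r i)" if "i < n" for i
    unfolding g_def z_def
    by (intro continuous_intros contc[OF that] contX[OF that])
  define S where "S = (\<Union>i<n. {s \<in> {0..}. g s i \<le> 0})"
  have "closed S" unfolding S_def
  proof (intro closed_UN ballI finite_lessThan)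
    fix i assume "i \<in> {..<n}"
    then show "closed {s \<in> {0..}. g s i \<le> 0}"
      using continuous_on_closed_Collect_le[OF contg[of i] continuous_on_const closed_atLeast, of 0] by simp
  qed
  have "S \<noteq> {}" using s0 unfolding S_def by auto
  have bdd: "bdd_below S" unfolding S_def by (auto intro!: bdd_belowI[of _ 0])
  define t where "t = Inf S"
  have "t \<in> S" unfolding t_def using closed_contains_Inf \<open>closed S\<close> \<open>S \<noteq> {}\<close> bdd by blast
  then obtain i where i: "i < n" "t \<ge> 0" "g t i \<le> 0" unfolding S_def by auto
  have before: "g r j > 0" if "0 \<le> r" "r < t" "j < n" for r j
  proof (rule ccontr)
    assume "\<not> g r j > 0"
    then have "r \<in> S" unfolding S_def using that by (force simp: not_less)
    then have "t \<le> r" unfolding t_def using bdd by (simp add: cInf_lower)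
    then show False using that by simp
  qed
  have g0: "g 0 j > 0" if "j < n" for j
    using init[OF that] eps unfolding g_def z_def by auto
  have "t \<noteq> 0" using g0[OF i(1)] i by auto
  then have tpos: "t > 0" using i by simp
  have gt: "g t j \<ge> 0" if "j < n" for j
  proof (rule ccontr)
    assume neg: "\<not> g t j \<ge> 0"
    have "continuous (at t within {0..}) (\<lambda>r. g r j)"
      using contg[OF that] i(2) continuous_on_eq_continuous_within by auto
    then have "((\<lambda>r. g r j) \<longlongrightarrow> g t j) (at t within {0..})"
      by (simp add: continuous_within)
    then have ev: "eventually (\<lambda>r. g r j < 0) (at t within {0..})"
      using neg by (intro order_tendstoD) auto
    have "at t within {0<..<t} \<le> at t within {0..}"
      by (intro at_le) auto
    moreover have "at t within {0<..<t} = at_left t"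
      using tpos by (intro at_within_nhd[of _ "{0<..}"]) auto
    ultimately have "eventually (\<lambda>r. g r j < 0) (at_left t)"
      using ev filter_leD by metis
    moreover have "eventually (\<lambda>r. r \<in> {0<..<t}) (at_left t)"
      using tpos by (rule eventually_at_left_real)
    ultimately have "eventually (\<lambda>r. g r j < 0 \<and> r \<in> {0<..<t}) (at_left t)"
      by (rule eventually_conj)
    then obtain r where "g r j < 0" "r \<in> {0<..<t}"
      using eventually_happens[of _ "at_left t"] by auto
    then show False using before[of r j] that by auto
  qed
  have eq: "norm (X t i) = z t i" using gt[OF i(1)] i(3) unfolding g_def by simp
  define V where "V = X' t i"
  define z' where "z' = F (c t) i + \<epsilon> * (B * exp (B * t))"
  have Vb: "norm V < z'"
  proof -
    have "norm V \<le> F (\<lambda>j. norm (X t j)) i" unfolding V_def using bX i by auto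
    also have "\<dots> \<le> F (\<lambda>j. c t j + \<epsilon> * exp (B * t)) i"
      using gt i(1) unfolding g_def z_def by (intro mono) auto
    also have "\<dots> = F (c t) i + \<epsilon> * exp (B * t) * F (\<lambda>j. 1) i"
      using lin[OF i(1), of "c t"] by simp
    also have "\<dots> < z'" unfolding z'_def using B[OF i(1)] eps
      by (intro add_strict_left_mono) (simp add: mult.assoc mult.left_commute)
    finally show ?thesis .
  qed
  have dz: "((\<lambda>r. z r i) has_real_derivative z') (at t)"
  proof -
    have "((\<lambda>r. c r i) has_real_derivative F (c t) i) (at t within {0<..})"
      using dc[OF i(2) i(1)] by (rule has_field_derivative_subset) auto
    then have "((\<lambda>r. c r i) has_real_derivative F (c t) i) (at t)"
      using tpos at_within_open[of t "{0<..}"] by auto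
    then show ?thesis unfolding z_def z'_def
      by (auto intro!: derivative_eq_intros)
  qed
  define \<delta> where "\<delta> = (z' - norm V) / 2"
  have "\<delta> > 0" using Vb unfolding \<delta>_def by simp
  have ev1: "eventually (\<lambda>r. norm ((X r i - X t i) - (r - t) *\<^sub>R V) / norm (r - t) < \<delta>) (at_left t)"
  proof -
    have "((\<lambda>r. X r i) has_derivative (\<lambda>h. h *\<^sub>R V)) (at t within {..<t})"
      using dX[OF i(2) i(1)] unfolding V_def has_vector_derivative_def
      by (rule has_derivative_at_withinI)
    then have "((\<lambda>r. norm ((X r i - X t i) - (r - t) *\<^sub>R V) / norm (r - t)) \<longlongrightarrow> 0) (at_left t)"
      unfolding has_derivative_iff_norm by simp
    then show ?thesis using \<open>\<delta> > 0\<close> by (intro order_tendstoD) auto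
  qed
  have ev2: "eventually (\<lambda>r. \<bar>(z r i - z t i) / (r - t) - z'\<bar> < \<delta>) (at_left t)"
  proof -
    have "((\<lambda>r. (z r i - z t i) / (r - t)) \<longlongrightarrow> z') (at_left t)"
      using has_field_derivative_iff[THEN iffD1, OF has_field_derivative_at_within[OF dz, of "{..<t}"]] by simp
    then have "((\<lambda>r. (z r i - z t i) / (r - t) - z') \<longlongrightarrow> 0) (at_left t)"
      using tendsto_diff[OF _ tendsto_const[of z'], of "\<lambda>r. (z r i - z t i) / (r - t)" z'] by simp
    then have "((\<lambda>r. \<bar>(z r i - z t i) / (r - t) - z'\<bar>) \<longlongrightarrow> 0) (at_left t)"
      by (simp add: tendsto_rabs_zero_iff)
    then show ?thesis using \<open>\<delta> > 0\<close> by (intro order_tendstoD) auto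
  qed
  have ev3: "eventually (\<lambda>r. r \<in> {0<..<t}) (at_left t)"
    using tpos by (rule eventually_at_left_real)
  obtain r where r1: "norm ((X r i - X t i) - (r - t) *\<^sub>R V) / norm (r - t) < \<delta>"
    and r2: "\<bar>(z r i - z t i) / (r - t) - z'\<bar> < \<delta>" and r3: "r \<in> {0<..<t}"
    using eventually_happens[OF eventually_conj[OF ev1 eventually_conj[OF ev2 ev3]]] by auto
  have rt: "t - r > 0" using r3 by simp
  have a1: "norm (X r i - X t i) \<le> (t - r) * (norm V + \<delta>)"
  proof -
    have "norm ((X r i - X t i) - (r - t) *\<^sub>R V) < \<delta> * (t - r)"
      using r1 rt by (simp add: divide_less_eq)
    moreover have "norm ((r - t) *\<^sub>R V) = (t - r) * norm V" using rt by simp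
    moreover have "norm (X r i - X t i) \<le> norm ((X r i - X t i) - (r - t) *\<^sub>R V) + norm ((r - t) *\<^sub>R V)"
      using norm_triangle_ineq[of "X r i - X t i - (r - t) *\<^sub>R V" "(r - t) *\<^sub>R V"] by simp
    ultimately show ?thesis by (simp add: algebra_simps)
  qed
  have a2: "z t i - z r i \<ge> (t - r) * (z' - \<delta>)"
  proof -
    have "(z r i - z t i) / (r - t) > z' - \<delta>" using r2 by simp
    then have "(z t i - z r i) / (t - r) > z' - \<delta>"
      by (metis minus_diff_eq minus_divide_divide)
    then show ?thesis using rt by (simp add: pos_less_divide_eq mult.commute)
  qed
  have "g r i > 0" using before[of r i] r3 i by auto
  moreover have "g r i = (z r i - z t i) + (norm (X t i) - norm (X r i))"
    unfolding g_def using eq by simp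
  moreover have "norm (X t i) - norm (X r i) \<le> norm (X r i - X t i)"
    by (metis norm_minus_commute norm_triangle_ineq2)
  ultimately have "0 < (t - r) * (norm V + \<delta>) - (t - r) * (z' - \<delta>)"
    using a1 a2 by linarith
  also have "\<dots> = 0" unfolding \<delta>_def by (simp add: algebra_simps)
  finally show False by simp
qed

lemma comparison:
  fixes X :: "real \<Rightarrow> nat \<Rightarrow> 'v::real_normed_vector" and X' :: "real \<Rightarrow> nat \<Rightarrow> 'v"
    and c :: "real \<Rightarrow> nat \<Rightarrow> real" and F :: "(nat \<Rightarrow> real) \<Rightarrow> nat \<Rightarrow> real"
  assumes dX: "\<And>s i. s \<ge> 0 \<Longrightarrow> i < n \<Longrightarrow> ((\<lambda>r. X r i) has_vector_derivative X' s i) (at s)"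
  and bX: "\<And>s i. s \<ge> 0 \<Longrightarrow> i < n \<Longrightarrow> norm (X' s i) \<le> F (\<lambda>j. norm (X s j)) i"
  and dc: "\<And>s i. s \<ge> 0 \<Longrightarrow> i < n \<Longrightarrow> ((\<lambda>r. c r i) has_real_derivative F (c s) i) (at s within {0..})"
  and init: "\<And>i. i < n \<Longrightarrow> norm (X 0 i) \<le> c 0 i"
  and mono: "\<And>y y' i. i < n \<Longrightarrow> (\<And>j. j < n \<Longrightarrow> y j \<le> y' j) \<Longrightarrow> F y i \<le> F y' i"
  and lin: "\<And>y e i. i < n \<Longrightarrow> F (\<lambda>j. y j + e) i = F y i + e * F (\<lambda>j. 1) i"
  and pos: "\<And>i. i < n \<Longrightarrow> F (\<lambda>j. 1) i \<ge> 0"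
  and s: "s \<ge> 0" and i: "i < n"
  shows "norm (X s i) \<le> c s i"
proof (rule field_le_epsilon)
  fix e :: real assume e: "e > 0"
  define B where "B = 1 + (\<Sum>i<n. F (\<lambda>j. 1) i)"
  have "e / exp (B * s) > 0" using e by simp
  from comparison_eps[OF dX bX dc init mono lin pos this] s i
  have "norm (X s i) < c s i + e / exp (B * s) * exp (B * s)" unfolding B_def by blast
  then show "norm (X s i) \<le> c s i + e" by simp
qed

lemma inner_cmult: "inner (a * b) (c::complex) = inner b (cnj a * c)"
  by (simp add: inner_complex_def algebra_simps)

lemma inner_matrix_adj: "inner (A *v v) w = inner v (cadj A *v w)"
proof -
  have "inner (A *v v) w = (\<Sum>i\<in>UNIV. \<Sum>j\<in>UNIV. inner (v $ j) (cnj (A $ i $ j) * w $ i))"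
    by (simp add: inner_vec_def matrix_vector_mult_def inner_sum_left inner_cmult)
  also have "\<dots> = (\<Sum>j\<in>UNIV. \<Sum>i\<in>UNIV. inner (v $ j) (cnj (A $ i $ j) * w $ i))"
    by (rule sum.swap)
  also have "\<dots> = inner v (cadj A *v w)"
    by (simp add: inner_vec_def matrix_vector_mult_def cadj_def inner_sum_right)
  finally show ?thesis .
qed

definition sadj :: "'d::finite mop \<Rightarrow> 'd mop \<Rightarrow> bool" where
  "sadj A B \<longleftrightarrow> (\<forall>v w. inner (app A v) w = inner v (app B w))"

lemma sadj_Phi: "sadj (Phi A) (Phi (cadj A))"
  unfolding sadj_def by (simp add: app_Phi inner_matrix_adj)

lemma sadj_mult: "sadj A A' \<Longrightarrow> sadj B B' \<Longrightarrow> sadj (A * B) (B' * A')"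
  unfolding sadj_def by (simp add: app_times)

lemma sadj_plus: "sadj A A' \<Longrightarrow> sadj B B' \<Longrightarrow> sadj (A + B) (A' + B')"
  unfolding sadj_def by (simp add: app_plus inner_add_left inner_add_right)

lemma sadj_scaleR: "sadj A A' \<Longrightarrow> sadj (r *\<^sub>R A) (r *\<^sub>R A')"
  unfolding sadj_def by (simp add: app_scaleR)

lemma sadj_uminus: "sadj A A' \<Longrightarrow> sadj (- A) (- A')"
  unfolding sadj_def by (simp add: app_uminus)

lemma sadj_zero: "sadj 0 0"
  unfolding sadj_def by (simp add: app_zero)

lemma sadj_sum: "(\<And>x. x \<in> S \<Longrightarrow> sadj (f x) (g x)) \<Longrightarrow> sadj (sum f S) (sum g S)"
  by (induction S rule: infinite_finite_induct) (auto intro: sadj_plus sadj_zero)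

lemma sadj_cong: "sadj A B \<Longrightarrow> B = B' \<Longrightarrow> sadj A B'"
  by simp

lemma sadj_skew: "sadj A (- A) \<Longrightarrow> inner (app A v) v = 0"
  unfolding sadj_def by (metis app_uminus inner_commute inner_minus_right neg_equal_zero)

lemma sadj_one: "sadj 1 1"
  unfolding sadj_def by (simp add: app_one)

lemma ac_swap: "(y::'a::ring) * x = - (x * y) \<Longrightarrow> y * (x * z) = - (x * (y * z))"
  by (metis minus_mult_left mult.assoc)

lemma rev4:
  fixes a b c d :: "'a::ring"
  assumes "b * a = - (a * b)" "c * a = - (a * c)" "d * a = - (a * d)"
    "c * b = - (b * c)" "d * b = - (b * d)" "d * c = - (c * d)"
  shows "d * c * b * a = a * b * c * d"
  using assms ac_swap[OF assms(1)] ac_swap[OF assms(2)] ac_swap[OF assms(3)]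
    ac_swap[OF assms(4)] ac_swap[OF assms(5)] ac_swap[OF assms(6)]
  by (simp add: mult.assoc)

definition sc :: "complex \<Rightarrow> complex^'d \<Rightarrow> complex^'d" where
  "sc a v = (\<chi> i. a * v $ i)"

lemma msc_mulv: "msc a A *v v = sc a (A *v v)"
  by (simp add: msc_def sc_def vec_eq_iff matrix_vector_mult_def sum_distrib_left mult.assoc)

lemma mulv_sc: "A *v sc a v = sc a (A *v v)"
  by (simp add: sc_def vec_eq_iff matrix_vector_mult_def sum_distrib_left mult.left_commute)

lemma cscale: "r *\<^sub>R (z::complex) = complex_of_real r * z"
  by (simp add: scaleR_conv_of_real)

lemma app_Phi_msc: "app (Phi (msc a A)) v = sc a (A *v v)"
  by (simp add: app_Phi msc_mulv)

lemma Phi_uminus: "Phi (- A) = - Phi A"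
  by (rule mop_eqI) (simp add: app_Phi app_uminus vec_eq_iff matrix_vector_mult_def sum_negf)

lemma Phi_mat2: "Phi (mat 2 :: complex^'d::finite^'d) = 2"
proof -
  have "mat 2 = (mat 1 + mat 1 :: complex^'d^'d)" by (simp add: vec_eq_iff mat_def)
  then have "Phi (mat 2 :: complex^'d^'d) = Phi (mat 1) + Phi (mat 1)" by (simp only: Phi_plus)
  then show ?thesis by (simp add: Phi_one)
qed

lemma Phi_msc_real: "Phi (msc (complex_of_real r) A) = r *\<^sub>R Phi A"
  by (rule mop_eqI) (simp add: app_Phi_msc app_scaleR app_Phi msc_mulv sc_def vec_eq_iff cscale)

definition J :: "'d::finite mop" where "J = Phi (msc \<i> (mat 1))"

lemma app_J: "app J v = sc \<i> v"
  unfolding J_def by (simp add: app_Phi_msc)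

lemma Phi_msc_i: "Phi (msc (complex_of_real r * \<i>) A) = r *\<^sub>R (J * Phi A)"
  by (rule mop_eqI) (simp add: app_Phi_msc app_scaleR app_times app_J app_Phi msc_mulv sc_def vec_eq_iff cscale)

lemma Phi_msc_i2: "Phi (msc (\<i> * complex_of_real r) A) = r *\<^sub>R (J * Phi A)"
  using Phi_msc_i[of r A] by (simp add: mult.commute)

lemma Phi_msc_mi2: "Phi (msc (- \<i> * complex_of_real r) A) = r *\<^sub>R (- (J * Phi A))"
  by (rule mop_eqI) (simp add: app_Phi_msc app_scaleR app_times app_J app_Phi app_uminus msc_mulv sc_def vec_eq_iff cscale)

lemma Phi_msc_1i: "Phi (msc \<i> A) = J * Phi A"
  using Phi_msc_i[of 1 A] by simp

lemma J_comm: "J * Phi A = Phi A * J"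
  by (rule mop_eqI) (simp add: app_times app_J app_Phi mulv_sc)

lemma J_sq: "J * J = - 1"
  by (rule mop_eqI) (simp add: app_times app_J app_uminus app_one sc_def vec_eq_iff)

lemma sadj_J: "sadj J (- J)"
  unfolding sadj_def
  by (simp add: app_J app_uminus sc_def inner_vec_def inner_cmult flip: sum_negf)

lemma norm_J: "norm (J :: 'd::finite mop) \<le> 1"
proof (rule norm_mop_bound)
  fix v :: "complex^'d"
  have "inner (app J v) (app J v) = inner v (app (- J) (app J v))"
    using sadj_J unfolding sadj_def by blast
  also have "\<dots> = inner v v"
    by (simp add: app_uminus J_sq app_one flip: app_times)
  finally have "norm (app J v) ^ 2 = norm v ^ 2" by (simp add: power2_norm_eq_inner)
  then show "norm (app J v) \<le> 1 * norm v" by simp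
qed simp

locale majctx =
  fixes n :: nat and cop :: "nat \<Rightarrow> complex^'d::finite^'d"
  assumes maj: "majorana n cop"
begin

abbreviation C :: "nat \<Rightarrow> 'd mop" where "C i \<equiv> Phi (cop i)"

lemma C_ac: "i < n \<Longrightarrow> j < n \<Longrightarrow> C i * C j + C j * C i = (if i = j then 2 else 0)"
proof -
  assume "i < n" "j < n"
  then have "anticomm (cop i) (cop j) = (if i = j then mat 2 else 0)"
    using maj unfolding majorana_def by blast
  then have "Phi (anticomm (cop i) (cop j)) = (if i = j then 2 else 0)"
    by (simp add: Phi_mat2 Phi_zero)
  then show ?thesis by (simp add: anticomm_def Phi_plus Phi_mult)
qed

lemma C_sq: "i < n \<Longrightarrow> C i * C i = 1"
proof -
  assume "i < n"
  then have "C i * C i + C i * C i = 2" using C_ac[of i i] by simp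
  then have "(2::real) *\<^sub>R (C i * C i) = (2::real) *\<^sub>R 1" by (simp add: scaleR_2)
  then show ?thesis by simp
qed

lemma C_anti: "i < n \<Longrightarrow> j < n \<Longrightarrow> i \<noteq> j \<Longrightarrow> C j * C i = - (C i * C j)"
  using C_ac[of i j] by (simp add: eq_neg_iff_add_eq_0 add.commute)

lemma C_anti': "i < n \<Longrightarrow> j < n \<Longrightarrow> i \<noteq> j \<Longrightarrow> C j * (C i * z) = - (C i * (C j * z))"
  by (rule ac_swap[OF C_anti])

lemma C_sq': "i < n \<Longrightarrow> C i * (C i * z) = z"
  using C_sq[of i] by (simp add: mult.assoc[symmetric])

lemma C_sadj: "i < n \<Longrightarrow> sadj (C i) (C i)"
  using sadj_Phi[of "cop i"] maj unfolding majorana_def by simp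

lemma C_iso: "i < n \<Longrightarrow> norm (app (C i) v) = norm v"
proof -
  assume i: "i < n"
  have "inner (app (C i) v) (app (C i) v) = inner v (app (C i) (app (C i) v))"
    using C_sadj[OF i] unfolding sadj_def by blast
  also have "\<dots> = inner v v" using C_sq[OF i] by (simp flip: app_times add: app_one)
  finally have "norm (app (C i) v) ^ 2 = norm v ^ 2" by (simp add: power2_norm_eq_inner)
  then show ?thesis by (simp add: power2_eq_iff_nonneg)
qed

lemma JC: "C i * J = J * C i"
  by (simp add: J_comm)
lemma JC': "C i * (J * z) = J * (C i * z)"
  by (simp add: J_comm mult.assoc[symmetric])
lemma JJ': "J * (J * z) = - z"
  by (simp add: J_sq mult.assoc[symmetric])

lemma C_swap: "j < i \<Longrightarrow> i < n \<Longrightarrow> C i * C j = - (C j * C i)"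
  by (rule C_anti) auto
lemma C_swap': "j < i \<Longrightarrow> i < n \<Longrightarrow> C i * (C j * z) = - (C j * (C i * z))"
  by (rule C_anti') auto

definition PP :: "(nat \<times> nat) set" where "PP = {(i,j). i < j \<and> j < n}"
definition QQ :: "(nat \<times> nat \<times> nat \<times> nat) set" where
  "QQ = {(i,j,k,l). i < j \<and> j < k \<and> k < l \<and> l < n}"

lemma Phi_H: "Phi (hamiltonian n cop t U) =
   (\<Sum>(a,b)\<in>PP. t a b *\<^sub>R (J * (C a * C b))) +
   (\<Sum>(a,b,c,d)\<in>QQ. U a b c d *\<^sub>R (C a * (C b * (C c * C d))))"
  unfolding hamiltonian_def PP_def QQ_def
  by (simp add: Phi_plus Phi_sum case_prod_beta Phi_msc_i Phi_msc_real Phi_mult mult.assoc)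

lemma skew_pair: "(a, b) \<in> PP \<Longrightarrow> sadj (J * (J * (C a * C b))) (- (J * (J * (C a * C b))))"
proof -
  assume "(a, b) \<in> PP"
  then have ab: "a < b" "b < n" unfolding PP_def by auto
  have "sadj (J * (J * (C a * C b))) (C b * C a * (- J) * (- J))"
    using ab by (intro sadj_mult sadj_J C_sadj) auto
  moreover have "C b * C a * (- J) * (- J) = - (J * (J * (C a * C b)))"
    using ab by (simp add: mult.assoc J_sq C_swap JJ')
  ultimately show ?thesis by simp
qed

lemma skew_pair_r: "(a, b) \<in> PP \<Longrightarrow> sadj (r *\<^sub>R (J * (J * (C a * C b)))) (- (r *\<^sub>R (J * (J * (C a * C b)))))"
  using sadj_scaleR[OF skew_pair, of a b r] by simp

lemma skew_quad: "(a, b, c, d) \<in> QQ \<Longrightarrow>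
  sadj (J * (C a * (C b * (C c * C d)))) (- (J * (C a * (C b * (C c * C d)))))"
proof -
  assume "(a, b, c, d) \<in> QQ"
  then have o: "a < b" "b < c" "c < d" "d < n" unfolding QQ_def by auto
  have s1: "sadj (J * (C a * (C b * (C c * C d)))) (C d * C c * C b * C a * (- J))"
    using o by (intro sadj_mult sadj_J C_sadj) auto
  have r0: "C d * C c * C b * C a = C a * C b * C c * C d"
    using o by (intro rev4 C_swap) auto
  have r: "C d * (C c * (C b * C a)) = C a * (C b * (C c * C d))"
    using r0 by (simp add: mult.assoc)
  have "C d * C c * C b * C a * (- J) = - (J * (C a * (C b * (C c * C d))))"
    using r by (simp add: mult.assoc JC JC')
  then show ?thesis using s1 by simp
qed

lemma skew_quad_r: "(a, b, c, d) \<in> QQ \<Longrightarrow>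
  sadj (r *\<^sub>R (J * (C a * (C b * (C c * C d))))) (- (r *\<^sub>R (J * (C a * (C b * (C c * C d))))))"
  using sadj_scaleR[OF skew_quad, of a b c d r] by simp

lemma h_expand: "J * Phi (hamiltonian n cop t U) =
   (\<Sum>(a,b)\<in>PP. t a b *\<^sub>R (J * (J * (C a * C b)))) +
   (\<Sum>(a,b,c,d)\<in>QQ. U a b c d *\<^sub>R (J * (C a * (C b * (C c * C d)))))"
  unfolding Phi_H by (simp add: distrib_left sum_distrib_left case_prod_beta)

lemma h_skew: "inner (app (J * Phi (hamiltonian n cop t U)) v) v = 0"
proof (rule sadj_skew)
  have "sadj (J * Phi (hamiltonian n cop t U))
    ((\<Sum>(a,b)\<in>PP. t a b *\<^sub>R (- (J * (J * (C a * C b))))) +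
     (\<Sum>(a,b,c,d)\<in>QQ. U a b c d *\<^sub>R (- (J * (C a * (C b * (C c * C d)))))))"
    unfolding h_expand
    by (intro sadj_plus sadj_sum sadj_scaleR)
       (auto simp: case_prod_beta intro: skew_pair_r skew_quad_r)
  then show "sadj (J * Phi (hamiltonian n cop t U)) (- (J * Phi (hamiltonian n cop t U)))"
    unfolding h_expand by (simp add: sum_negf case_prod_beta)
qed

definition comm :: "'d mop \<Rightarrow> 'd mop \<Rightarrow> 'd mop" where "comm X Y = X * Y - Y * X"

lemma comm_plus: "comm (A + B) Y = comm A Y + comm B Y"
  unfolding comm_def by (simp add: algebra_simps)
lemma comm_scaleR: "comm (r *\<^sub>R A) Y = r *\<^sub>R comm A Y"
  unfolding comm_def by (simp add: algebra_simps)
lemma comm_zero: "comm 0 Y = 0"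
  unfolding comm_def by simp
lemma comm_sum: "comm (sum f S) Y = (\<Sum>x\<in>S. comm (f x) Y)"
  by (induction S rule: infinite_finite_induct) (auto simp: comm_zero comm_plus)

definition T2 :: "nat \<Rightarrow> nat \<Rightarrow> nat \<Rightarrow> 'd mop" where
  "T2 a b i = C a * (C b * C i) - C i * (C a * C b)"
definition T4 :: "nat \<Rightarrow> nat \<Rightarrow> nat \<Rightarrow> nat \<Rightarrow> nat \<Rightarrow> 'd mop" where
  "T4 a b c d i = C a * (C b * (C c * (C d * C i))) - C i * (C a * (C b * (C c * C d)))"

lemma K_expand: "comm (J * Phi (hamiltonian n cop t U)) (C i) =
   J * ((\<Sum>(a,b)\<in>PP. t a b *\<^sub>R (J * T2 a b i)) +
        (\<Sum>(a,b,c,d)\<in>QQ. U a b c d *\<^sub>R T4 a b c d i))"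
proof -
  have 1: "comm (J * X) (C i) = J * comm X (C i)" for X
    unfolding comm_def by (simp add: right_diff_distrib mult.assoc[symmetric] JC)
  have 2: "comm (J * (C a * C b)) (C i) = J * T2 a b i" for a b
    unfolding comm_def T2_def by (simp add: right_diff_distrib mult.assoc JC')
  have 3: "comm (C a * (C b * (C c * C d))) (C i) = T4 a b c d i" for a b c d
    unfolding comm_def T4_def by (simp add: mult.assoc)
  show ?thesis unfolding 1 Phi_H
    by (simp add: comm_plus comm_sum comm_scaleR case_prod_beta 2 3)
qed


end

context majctx begin

lemma T2_eval: "(a, b) \<in> PP \<Longrightarrow> i < n \<Longrightarrow>
  T2 a b i = (if i = a then - (2 *\<^sub>R C b) else if i = b then 2 *\<^sub>R C a else 0)"
proof -
  assume ab: "(a, b) \<in> PP" and i: "i < n"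
  then have o: "a < b" "b < n" unfolding PP_def by auto
  consider "i = a" | "i = b" | "i < a" | "a < i" "i < b" | "b < i" using o by arith
  then show ?thesis
    by cases (use o i in \<open>simp_all add: T2_def mult.assoc C_swap C_swap' C_sq C_sq' scaleR_2\<close>)
qed

lemma T4_eval: "(a, b, c, d) \<in> QQ \<Longrightarrow> i < n \<Longrightarrow>
  T4 a b c d i = (if i = a then - (2 *\<^sub>R (C b * (C c * C d)))
    else if i = b then 2 *\<^sub>R (C a * (C c * C d))
    else if i = c then - (2 *\<^sub>R (C a * (C b * C d)))
    else if i = d then 2 *\<^sub>R (C a * (C b * C c)) else 0)"
proof -
  assume q: "(a, b, c, d) \<in> QQ" and i: "i < n"
  then have o: "a < b" "b < c" "c < d" "d < n" unfolding QQ_def by auto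
  consider "i = a" | "i = b" | "i = c" | "i = d" | "i < a" | "a < i" "i < b" | "b < i" "i < c"
    | "c < i" "i < d" | "d < i" using o by arith
  then show ?thesis
    by cases (use o i in \<open>simp_all add: T4_def mult.assoc C_swap C_swap' C_sq C_sq' scaleR_2\<close>)
qed

end

lemma sum_if_filter: "finite S \<Longrightarrow> (\<Sum>x\<in>S. if P x then f x else 0) = (\<Sum>x\<in>{x\<in>S. P x}. f x)"
  by (simp add: sum.inter_filter)

lemma reindex_pairs:
  fixes t :: "nat \<Rightarrow> nat \<Rightarrow> real" and y :: "nat \<Rightarrow> real"
  assumes t: "antisym2 t" and i: "i < n" and y: "\<And>j. 0 \<le> y j"
  shows "(\<Sum>(a,b)\<in>{(a,b). a < b \<and> b < n}. \<bar>t a b\<bar> * (if i = a then 2 * y b else if i = b then 2 * y a else 0))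
    \<le> 2 * (\<Sum>j<n. \<bar>t i j\<bar> * y j)"
proof -
  define PP where "PP = {(a,b). a < b \<and> b < (n::nat)}"
  define T where "T = {j. j < n \<and> j \<noteq> i}"
  define ins where "ins j = (if i < j then (i, j) else (j, i))" for j
  define f where "f = (\<lambda>(a,b). \<bar>t a b\<bar> * (if i = a then 2 * y b else if i = b then 2 * y a else 0))"
  have finPP: "finite PP"
  proof -
    have "PP \<subseteq> {..<n} \<times> {..<n}" unfolding PP_def by auto
    then show ?thesis by (rule finite_subset) auto
  qed
  have "sum f PP = sum f {p\<in>PP. fst p = i \<or> snd p = i}"
    using finPP by (intro sum.mono_neutral_right) (auto simp: f_def split: if_splits)
  also have "{p\<in>PP. fst p = i \<or> snd p = i} = ins ` T"
  proof
    show "{p \<in> PP. fst p = i \<or> snd p = i} \<subseteq> ins ` T"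
    proof
      fix p assume p: "p \<in> {p \<in> PP. fst p = i \<or> snd p = i}"
      obtain a b where ab: "p = (a, b)" by (cases p)
      show "p \<in> ins ` T"
      proof (cases "a = i")
        case True
        then have "p = ins b" "b \<in> T" using p ab unfolding ins_def T_def PP_def by auto
        then show ?thesis by blast
      next
        case False
        then have "p = ins a" "a \<in> T" using p ab unfolding ins_def T_def PP_def by auto
        then show ?thesis by blast
      qed
    qed
    show "ins ` T \<subseteq> {p \<in> PP. fst p = i \<or> snd p = i}"
      unfolding ins_def T_def PP_def using i by auto
  qed
  also have "sum f (ins ` T) = sum (f \<circ> ins) T"
    by (rule sum.reindex) (auto simp: inj_on_def ins_def T_def split: if_splits)
  also have "\<dots> = (\<Sum>j\<in>T. 2 * (\<bar>t i j\<bar> * y j))"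
  proof (rule sum.cong[OF refl])
    fix j assume "j \<in> T"
    have "\<bar>t j i\<bar> = \<bar>t i j\<bar>" using t unfolding antisym2_def by (metis abs_minus_cancel)
    then show "(f \<circ> ins) j = 2 * (\<bar>t i j\<bar> * y j)"
      using \<open>j \<in> T\<close> unfolding f_def ins_def T_def by auto
  qed
  also have "\<dots> \<le> (\<Sum>j<n. 2 * (\<bar>t i j\<bar> * y j))"
    using y by (intro sum_mono2) (auto simp: T_def)
  finally show ?thesis unfolding f_def PP_def by (simp add: sum_distrib_left)
qed

lemma reindex_quads:
  fixes U :: "nat \<Rightarrow> nat \<Rightarrow> nat \<Rightarrow> nat \<Rightarrow> real" and y :: "nat \<Rightarrow> real"
  assumes U: "antisym4 U" and i: "i < n"
  shows "(\<Sum>(a,b,c,d)\<in>{(a,b,c,d). a < b \<and> b < c \<and> c < d \<and> d < n}. \<bar>U a b c d\<bar> *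
      (if i = a then 2 * (y b + y c + y d) else if i = b then 2 * (y a + y c + y d)
       else if i = c then 2 * (y a + y b + y d) else if i = d then 2 * (y a + y b + y c) else 0))
    = 2 * (\<Sum>(j,k,l)\<in>{(j,k,l). j < k \<and> k < l \<and> l < n \<and> j \<noteq> i \<and> k \<noteq> i \<and> l \<noteq> i}.
        \<bar>U i j k l\<bar> * (y j + y k + y l))"
proof -
  define QQ where "QQ = {(a,b,c,d). a < b \<and> b < c \<and> c < d \<and> d < (n::nat)}"
  define T where "T = {(j,k,l). j < k \<and> k < l \<and> l < n \<and> j \<noteq> i \<and> k \<noteq> i \<and> l \<noteq> i}"
  define ins where "ins = (\<lambda>(j,k,l). if i < j then (i,j,k,l) else if i < k then (j,i,k,l)
      else if i < l then (j,k,i,l) else (j,k,l,i))"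
  define f where "f = (\<lambda>(a,b,c,d). \<bar>U a b c d\<bar> *
      (if i = a then 2 * (y b + y c + y d) else if i = b then 2 * (y a + y c + y d)
       else if i = c then 2 * (y a + y b + y d) else if i = d then 2 * (y a + y b + y c) else 0))"
  define g where "g = (\<lambda>(j,k,l). 2 * (\<bar>U i j k l\<bar> * (y j + y k + y l)))"
  define hasi where "hasi = (\<lambda>(a,b,c,d). a = i \<or> b = i \<or> c = i \<or> (d::nat) = i)"
  have finQQ: "finite QQ"
  proof -
    have "QQ \<subseteq> {..<n} \<times> {..<n} \<times> {..<n} \<times> {..<n}" unfolding QQ_def by auto
    then show ?thesis by (rule finite_subset) auto
  qed
  have "sum f QQ = sum f {q\<in>QQ. hasi q}"
    using finQQ by (intro sum.mono_neutral_right) (auto simp: f_def hasi_def split: if_splits)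
  also have "{q\<in>QQ. hasi q} = ins ` T"
  proof
    show "{q\<in>QQ. hasi q} \<subseteq> ins ` T"
    proof
      fix q assume q: "q \<in> {q\<in>QQ. hasi q}"
      obtain a b c d where abcd: "q = (a, b, c, d)" by (cases q) auto
      have o: "a < b" "b < c" "c < d" "d < n" using q abcd unfolding QQ_def by auto
      consider "a = i" | "b = i" | "c = i" | "d = i" using q abcd unfolding hasi_def by auto
      then show "q \<in> ins ` T"
      proof cases
        case 1
        then have "q = ins (b, c, d)" "(b, c, d) \<in> T" using o abcd unfolding ins_def T_def by auto
        then show ?thesis by blast
      next
        case 2
        then have "q = ins (a, c, d)" "(a, c, d) \<in> T" using o abcd unfolding ins_def T_def by auto
        then show ?thesis by blast
      next
        case 3
        then have "q = ins (a, b, d)" "(a, b, d) \<in> T" using o abcd unfolding ins_def T_def by auto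
        then show ?thesis by blast
      next
        case 4
        then have "q = ins (a, b, c)" "(a, b, c) \<in> T" using o abcd unfolding ins_def T_def by auto
        then show ?thesis by blast
      qed
    qed
    show "ins ` T \<subseteq> {q\<in>QQ. hasi q}"
      unfolding ins_def T_def QQ_def hasi_def using i by (auto split: if_splits)
  qed
  also have "sum f (ins ` T) = sum (f \<circ> ins) T"
    by (rule sum.reindex) (auto simp: inj_on_def ins_def T_def split: if_splits)
  also have "\<dots> = sum g T"
  proof (rule sum.cong[OF refl])
    fix p assume "p \<in> T"
    obtain j k l where p: "p = (j, k, l)" by (cases p) auto
    have o: "j < k" "k < l" "l < n" "j \<noteq> i" "k \<noteq> i" "l \<noteq> i" using \<open>p \<in> T\<close> p unfolding T_def by auto
    have a1: "U j i k l = - U i j k l" and a2: "U j k i l = U i j k l" and a3: "U j k l i = - U i j k l"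
      using U unfolding antisym4_def by (metis minus_minus)+
    show "(f \<circ> ins) p = g p"
      using o a1 a2 a3 unfolding p f_def g_def ins_def by (auto simp: algebra_simps)
  qed
  finally show ?thesis unfolding f_def g_def QQ_def T_def by (simp add: sum_distrib_left case_prod_beta)
qed

lemma exp_iso:
  fixes h :: "'d::finite mop"
  assumes sk: "\<And>w. inner (app h w) w = 0"
  shows "norm (app (exp (r *\<^sub>R h)) v) = norm v"
proof -
  define g where "g r = app (exp (r *\<^sub>R h)) v" for r
  have dg: "(g has_derivative (\<lambda>x. x *\<^sub>R app h (g r))) (at r)" for r
  proof -
    have "((\<lambda>t. exp (t *\<^sub>R h)) has_derivative (\<lambda>x. x *\<^sub>R (h * exp (r *\<^sub>R h)))) (at r)"
      using exp_scaleR_has_vector_derivative_left[of h r] unfolding has_vector_derivative_def .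
    from bounded_linear.has_derivative[OF bounded_linear_app_left this, of v]
    show ?thesis unfolding g_def
      by (rule has_derivative_eq_rhs) (simp add: app_scaleR app_times)
  qed
  have df: "((\<lambda>r. inner (g r) (g r)) has_derivative (\<lambda>x. 0)) (at r within UNIV)" for r
  proof -
    have sk': "inner w (app h w) = 0" for w using sk[of w] by (simp add: inner_commute)
    from has_derivative_inner[OF dg dg, of r]
    show ?thesis
      by (rule has_derivative_eq_rhs) (simp add: sk sk')
  qed
  obtain c where c: "\<And>x. inner (g x) (g x) = c"
    using has_derivative_zero_constant[of UNIV "\<lambda>r. inner (g r) (g r)"] df by auto
  have "g 0 = v" unfolding g_def by (simp add: app_one)
  then have "inner (g r) (g r) = inner v v" using c by metis
  then have "norm (g r) ^ 2 = norm v ^ 2" by (simp add: power2_norm_eq_inner)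
  then show ?thesis unfolding g_def by (simp add: power2_eq_iff_nonneg)
qed

locale dyn = majctx n cop for n :: nat and cop :: "nat \<Rightarrow> complex^'d::finite^'d" +
  fixes t :: "nat \<Rightarrow> nat \<Rightarrow> real" and U :: "nat \<Rightarrow> nat \<Rightarrow> nat \<Rightarrow> nat \<Rightarrow> real" and m :: nat
  assumes m: "m < n"
begin

definition h :: "'d mop" where "h = J * Phi (hamiltonian n cop t U)"
definition E :: "real \<Rightarrow> 'd mop" where "E s = exp (s *\<^sub>R h)"
definition E' :: "real \<Rightarrow> 'd mop" where "E' s = exp (s *\<^sub>R (- h))"
definition Y :: "real \<Rightarrow> nat \<Rightarrow> 'd mop" where "Y s j = E s * C j * E' s"
definition X :: "real \<Rightarrow> nat \<Rightarrow> 'd mop" where "X s j = Y s j * C m + C m * Y s j"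
definition alpha :: "real \<Rightarrow> 'd mop \<Rightarrow> 'd mop" where
  "alpha s Z = E s * Z * E' s * C m + C m * (E s * Z * E' s)"

lemma h_Phi: "h = Phi (msc \<i> (hamiltonian n cop t U))"
  unfolding h_def by (simp add: Phi_msc_1i)

lemma E_Phi: "E s = Phi (mexp (s *\<^sub>R msc \<i> (hamiltonian n cop t U)))"
  unfolding E_def h_Phi by (simp add: Phi_mexp Phi_scaleR)

lemma E'_Phi: "E' s = Phi (mexp (s *\<^sub>R (- msc \<i> (hamiltonian n cop t U))))"
  unfolding E'_def h_Phi by (simp add: Phi_mexp Phi_scaleR Phi_uminus)

lemma heis_Phi: "Phi (heis (hamiltonian n cop t U) s A) = E s * Phi A * E' s"
  unfolding heis_def E_def E'_def h_def Phi_mult Phi_mexp Phi_msc_i2 Phi_msc_mi2 ..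

lemma E'E: "E' s * E s = 1"
  unfolding E_def E'_def using exp_minus_inverse[of "- (s *\<^sub>R h)"] by simp

lemma E'E': "E' s * (E s * z) = z"
  using E'E[of s] by (simp add: mult.assoc[symmetric])

lemma JE: "J * E s = E s * J"
  unfolding E_Phi by (rule J_comm)
lemma JE': "J * E' s = E' s * J"
  unfolding E'_Phi by (rule J_comm)

lemma h_skew': "inner (app h w) w = 0"
  unfolding h_def by (rule h_skew)

lemma E_iso: "norm (app (E s) v) = norm v"
  unfolding E_def by (rule exp_iso) (rule h_skew')

lemma E'_iso: "norm (app (E' s) v) = norm v"
  unfolding E'_def by (rule exp_iso) (simp add: app_uminus h_skew')

lemma norm_Y: "j < n \<Longrightarrow> norm (Y s j) \<le> 1"
  by (rule norm_mop_bound) (simp_all add: Y_def app_times E_iso E'_iso C_iso)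

lemma alpha_plus: "alpha s (A + B) = alpha s A + alpha s B"
  unfolding alpha_def by (simp add: algebra_simps)
lemma alpha_scaleR: "alpha s (r *\<^sub>R A) = r *\<^sub>R alpha s A"
  unfolding alpha_def by (simp add: algebra_simps)
lemma alpha_uminus: "alpha s (- A) = - alpha s A"
  unfolding alpha_def by (simp add: algebra_simps)
lemma alpha_zero: "alpha s 0 = 0"
  unfolding alpha_def by simp
lemma alpha_sum: "alpha s (sum f S) = (\<Sum>x\<in>S. alpha s (f x))"
  by (induction S rule: infinite_finite_induct) (auto simp: alpha_zero alpha_plus)
lemma alpha_J: "alpha s (J * Z) = J * alpha s Z"
proof -
  have 1: "E s * (J * z) = J * (E s * z)" for z using JE by (simp add: mult.assoc[symmetric])
  have 2: "C m * (J * z) = J * (C m * z)" for z by (rule JC')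
  have 3: "E' s * (J * z) = J * (E' s * z)" for z using JE' by (simp add: mult.assoc[symmetric])
  have 4: "E' s * J = J * E' s" "C m * J = J * C m" using JE' JC by auto
  show ?thesis unfolding alpha_def by (simp add: mult.assoc distrib_left 1 2 3 4)
qed

lemma alpha_C: "alpha s (C j) = X s j"
  unfolding alpha_def X_def Y_def by simp

lemma ring_triple: "(a::'a::ring) * b * c * M + M * (a * b * c) =
  a * b * (c * M + M * c) - a * (b * M + M * b) * c + (a * M + M * a) * b * c"
  by (simp add: algebra_simps)

lemma n3: "norm ((a::'a::real_normed_algebra) * b * c) \<le> norm a * norm b * norm c"
proof -
  have "norm (a * b * c) \<le> norm (a * b) * norm c" by (rule norm_mult_ineq)
  also have "\<dots> \<le> norm a * norm b * norm c" by (rule mult_right_mono[OF norm_mult_ineq norm_ge_zero])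
  finally show ?thesis .
qed

lemma le1: "0 \<le> x \<Longrightarrow> x \<le> 1 \<Longrightarrow> 0 \<le> y \<Longrightarrow> y \<le> 1 \<Longrightarrow> 0 \<le> z \<Longrightarrow> x * y * z \<le> (z::real)"
proof -
  assume a: "0 \<le> x" "x \<le> 1" "0 \<le> y" "y \<le> 1" "0 \<le> z"
  have "x * y \<le> 1" using a by (intro mult_le_one) auto
  moreover have "0 \<le> x * y" using a by simp
  ultimately show ?thesis using a(5) by (intro mult_left_le_one_le) auto
qed

lemma n3a: "norm a \<le> 1 \<Longrightarrow> norm b \<le> 1 \<Longrightarrow> norm ((a::'a::real_normed_algebra) * b * c) \<le> norm c"
  using n3[of a b c] le1[of "norm a" "norm b" "norm c"] by simp
lemma n3b: "norm a \<le> 1 \<Longrightarrow> norm c \<le> 1 \<Longrightarrow> norm ((a::'a::real_normed_algebra) * b * c) \<le> norm b"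
  using n3[of a b c] le1[of "norm a" "norm c" "norm b"] by (simp add: mult.commute mult.left_commute)
lemma n3c: "norm b \<le> 1 \<Longrightarrow> norm c \<le> 1 \<Longrightarrow> norm ((a::'a::real_normed_algebra) * b * c) \<le> norm a"
  using n3[of a b c] le1[of "norm b" "norm c" "norm a"] by (simp add: mult.commute mult.left_commute)

lemma alpha_triple: "j < n \<Longrightarrow> k < n \<Longrightarrow> l < n \<Longrightarrow>
  norm (alpha s (C j * (C k * C l))) \<le> norm (X s j) + norm (X s k) + norm (X s l)"
proof -
  assume jkl: "j < n" "k < n" "l < n"
  have eq: "E s * (C j * (C k * C l)) * E' s = Y s j * Y s k * Y s l"
    unfolding Y_def by (simp add: mult.assoc E'E')
  have eq1: "alpha s (C j * (C k * C l)) = Y s j * Y s k * Y s l * C m + C m * (Y s j * Y s k * Y s l)"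
    unfolding alpha_def eq ..
  have eq2: "Y s j * Y s k * Y s l * C m + C m * (Y s j * Y s k * Y s l) =
     Y s j * Y s k * X s l - Y s j * X s k * Y s l + X s j * Y s k * Y s l"
    unfolding X_def by (rule ring_triple)
  have y: "norm (Y s j) \<le> 1" "norm (Y s k) \<le> 1" "norm (Y s l) \<le> 1" using jkl norm_Y by auto
  have 1: "norm (Y s j * Y s k * X s l) \<le> norm (X s l)" by (rule n3a[OF y(1) y(2)])
  have 2: "norm (Y s j * X s k * Y s l) \<le> norm (X s k)" by (rule n3b[OF y(1) y(3)])
  have 3: "norm (X s j * Y s k * Y s l) \<le> norm (X s j)" by (rule n3c[OF y(2) y(3)])
  have tri: "norm (a - b + c) \<le> norm a + norm b + norm (c::'d mop)" for a b c
    using norm_triangle_ineq[of "a - b" c] norm_triangle_ineq4[of a b] by linarith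
  show ?thesis unfolding eq1 eq2
    using tri[of "Y s j * Y s k * X s l" "Y s j * X s k * Y s l" "X s j * Y s k * Y s l"] 1 2 3
    by linarith
qed

end

context dyn
begin

lemma X_deriv: "((\<lambda>r. X r i) has_vector_derivative alpha s (comm h (C i))) (at s)"
proof -
  have dE: "(E has_derivative (\<lambda>x. x *\<^sub>R (E s * h))) (at s)"
    using exp_scaleR_has_vector_derivative_right[of h s] unfolding has_vector_derivative_def E_def[abs_def] .
  have dE': "(E' has_derivative (\<lambda>x. x *\<^sub>R ((- h) * E' s))) (at s)"
    using exp_scaleR_has_vector_derivative_left[of "- h" s] unfolding has_vector_derivative_def E'_def[abs_def] .
  have dY: "((\<lambda>r. E r * C i * E' r) has_derivative (\<lambda>x. x *\<^sub>R (E s * (h * C i - C i * h) * E' s))) (at s)"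
    using has_derivative_mult[OF has_derivative_mult[OF dE has_derivative_const[of "C i"]] dE']
    by (rule has_derivative_eq_rhs) (simp add: fun_eq_iff algebra_simps)
  have dX: "((\<lambda>r. E r * C i * E' r * C m + C m * (E r * C i * E' r)) has_derivative
      (\<lambda>x. x *\<^sub>R alpha s (comm h (C i)))) (at s)"
    using has_derivative_add[OF has_derivative_mult[OF dY has_derivative_const[of "C m"]]
        has_derivative_mult[OF has_derivative_const[of "C m"] dY]]
    by (rule has_derivative_eq_rhs) (simp add: fun_eq_iff alpha_def comm_def algebra_simps)
  then show ?thesis unfolding has_vector_derivative_def X_def Y_def .
qed

lemma norm_JZ: "norm (J * Z) \<le> norm (Z::'d mop)"
proof -
  have j: "norm (J::'d mop) \<le> 1" by (rule norm_J)
  show ?thesis using norm_mult_ineq[of J Z] mult_right_mono[OF j norm_ge_zero[of Z]] by linarith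
qed

lemma pt2: "(a, b) \<in> PP \<Longrightarrow> i < n \<Longrightarrow> norm (alpha s (J * T2 a b i)) \<le>
  (if i = a then 2 * norm (X s b) else if i = b then 2 * norm (X s a) else 0)"
proof -
  assume ab: "(a, b) \<in> PP" and i: "i < n"
  have "norm (alpha s (J * T2 a b i)) \<le> norm (alpha s (T2 a b i))"
    unfolding alpha_J by (rule norm_JZ)
  also have "\<dots> = (if i = a then 2 * norm (X s b) else if i = b then 2 * norm (X s a) else 0)"
    using T2_eval[OF ab i] by (simp add: alpha_uminus alpha_scaleR alpha_C alpha_zero)
  finally show ?thesis .
qed

lemma pt4: "(a, b, c, d) \<in> QQ \<Longrightarrow> i < n \<Longrightarrow> norm (alpha s (T4 a b c d i)) \<le>
  (if i = a then 2 * (norm (X s b) + norm (X s c) + norm (X s d))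
   else if i = b then 2 * (norm (X s a) + norm (X s c) + norm (X s d))
   else if i = c then 2 * (norm (X s a) + norm (X s b) + norm (X s d))
   else if i = d then 2 * (norm (X s a) + norm (X s b) + norm (X s c)) else 0)"
proof -
  assume q: "(a, b, c, d) \<in> QQ" and i: "i < n"
  then have o: "a < n" "b < n" "c < n" "d < n" unfolding QQ_def by auto
  show ?thesis
    using T4_eval[OF q i] alpha_triple[of b c d s] alpha_triple[of a c d s]
      alpha_triple[of a b d s] alpha_triple[of a b c s] o
    by (simp add: alpha_uminus alpha_scaleR alpha_zero)
qed

lemma bound:
  assumes i: "i < n" and ta: "antisym2 t" and Ua: "antisym4 U"
  shows "norm (alpha s (comm h (C i))) \<le>
    2 * (\<Sum>(j,k,l)\<in>{(j,k,l). j < k \<and> k < l \<and> l < n \<and> j \<noteq> i \<and> k \<noteq> i \<and> l \<noteq> i}.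
          \<bar>U i j k l\<bar> * (norm (X s j) + norm (X s k) + norm (X s l)))
    + 2 * (\<Sum>j<n. \<bar>t i j\<bar> * norm (X s j))"
proof -
  define x where "x j = norm (X s j)" for j
  define W where "W = (\<Sum>(a,b)\<in>PP. t a b *\<^sub>R (J * T2 a b i)) +
        (\<Sum>(a,b,c,d)\<in>QQ. U a b c d *\<^sub>R T4 a b c d i)"
  have "comm h (C i) = J * W" unfolding h_def W_def by (rule K_expand)
  then have 1: "norm (alpha s (comm h (C i))) \<le> norm (alpha s W)"
    using alpha_J norm_JZ by simp
  have aW: "alpha s W = (\<Sum>(a,b)\<in>PP. t a b *\<^sub>R alpha s (J * T2 a b i)) +
        (\<Sum>(a,b,c,d)\<in>QQ. U a b c d *\<^sub>R alpha s (T4 a b c d i))"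
    unfolding W_def alpha_plus alpha_sum by (simp add: case_prod_beta alpha_scaleR)
  have n1: "norm (\<Sum>(a,b)\<in>PP. t a b *\<^sub>R alpha s (J * T2 a b i)) \<le>
      (\<Sum>(a,b)\<in>PP. \<bar>t a b\<bar> * (if i = a then 2 * x b else if i = b then 2 * x a else 0))"
  proof -
    have "norm (\<Sum>(a,b)\<in>PP. t a b *\<^sub>R alpha s (J * T2 a b i)) \<le>
        (\<Sum>p\<in>PP. norm ((\<lambda>(a,b). t a b *\<^sub>R alpha s (J * T2 a b i)) p))"
      by (rule norm_sum)
    also have "\<dots> \<le> (\<Sum>(a,b)\<in>PP. \<bar>t a b\<bar> * (if i = a then 2 * x b else if i = b then 2 * x a else 0))"
    proof (rule sum_mono)
      fix p assume p: "p \<in> PP"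
      obtain a b where ab: "p = (a, b)" by (cases p)
      show "norm ((\<lambda>(a,b). t a b *\<^sub>R alpha s (J * T2 a b i)) p) \<le>
        (\<lambda>(a,b). \<bar>t a b\<bar> * (if i = a then 2 * x b else if i = b then 2 * x a else 0)) p"
        using pt2[of a b i s] p i unfolding ab x_def by (simp add: mult_left_mono)
    qed
    finally show ?thesis .
  qed
  have n2: "norm (\<Sum>(a,b,c,d)\<in>QQ. U a b c d *\<^sub>R alpha s (T4 a b c d i)) \<le>
      (\<Sum>(a,b,c,d)\<in>QQ. \<bar>U a b c d\<bar> *
      (if i = a then 2 * (x b + x c + x d) else if i = b then 2 * (x a + x c + x d)
       else if i = c then 2 * (x a + x b + x d) else if i = d then 2 * (x a + x b + x c) else 0))"
  proof -
    have "norm (\<Sum>(a,b,c,d)\<in>QQ. U a b c d *\<^sub>R alpha s (T4 a b c d i)) \<le>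
        (\<Sum>p\<in>QQ. norm ((\<lambda>(a,b,c,d). U a b c d *\<^sub>R alpha s (T4 a b c d i)) p))"
      by (rule norm_sum)
    also have "\<dots> \<le> (\<Sum>(a,b,c,d)\<in>QQ. \<bar>U a b c d\<bar> *
      (if i = a then 2 * (x b + x c + x d) else if i = b then 2 * (x a + x c + x d)
       else if i = c then 2 * (x a + x b + x d) else if i = d then 2 * (x a + x b + x c) else 0))"
    proof (rule sum_mono)
      fix p assume p: "p \<in> QQ"
      obtain a b c d where ab: "p = (a, b, c, d)" by (cases p) auto
      show "norm ((\<lambda>(a,b,c,d). U a b c d *\<^sub>R alpha s (T4 a b c d i)) p) \<le>
        (\<lambda>(a,b,c,d). \<bar>U a b c d\<bar> *
      (if i = a then 2 * (x b + x c + x d) else if i = b then 2 * (x a + x c + x d)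
       else if i = c then 2 * (x a + x b + x d) else if i = d then 2 * (x a + x b + x c) else 0)) p"
        using pt4[of a b c d i s] p i unfolding ab x_def
        by (simp only: prod.case norm_scaleR) (rule mult_left_mono, auto)
    qed
    finally show ?thesis .
  qed
  have r1: "(\<Sum>(a,b)\<in>PP. \<bar>t a b\<bar> * (if i = a then 2 * x b else if i = b then 2 * x a else 0))
      \<le> 2 * (\<Sum>j<n. \<bar>t i j\<bar> * x j)"
    unfolding PP_def by (rule reindex_pairs[OF ta i]) (simp add: x_def)
  have r2: "(\<Sum>(a,b,c,d)\<in>QQ. \<bar>U a b c d\<bar> *
      (if i = a then 2 * (x b + x c + x d) else if i = b then 2 * (x a + x c + x d)
       else if i = c then 2 * (x a + x b + x d) else if i = d then 2 * (x a + x b + x c) else 0))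
    = 2 * (\<Sum>(j,k,l)\<in>{(j,k,l). j < k \<and> k < l \<and> l < n \<and> j \<noteq> i \<and> k \<noteq> i \<and> l \<noteq> i}.
        \<bar>U i j k l\<bar> * (x j + x k + x l))"
    unfolding QQ_def by (rule reindex_quads[OF Ua i])
  have "norm (alpha s W) \<le> norm (\<Sum>(a,b)\<in>PP. t a b *\<^sub>R alpha s (J * T2 a b i)) +
      norm (\<Sum>(a,b,c,d)\<in>QQ. U a b c d *\<^sub>R alpha s (T4 a b c d i))"
    unfolding aW by (rule norm_triangle_ineq)
  then show ?thesis using 1 n1 n2 r1 r2 unfolding x_def by linarith
qed

end

lemma lin_sum: "(\<Sum>x\<in>S. f x * (g x + e * k x)) = (\<Sum>x\<in>S. f x * g x) + e * (\<Sum>x\<in>S. f x * (k x::real))"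
  by (simp add: sum.distrib sum_distrib_left algebra_simps)

theorem mainTheorem2:
  fixes n :: nat
    and cop :: "nat \<Rightarrow> complex^'d^'d"
    and t :: "nat \<Rightarrow> nat \<Rightarrow> real"
    and U :: "nat \<Rightarrow> nat \<Rightarrow> nat \<Rightarrow> nat \<Rightarrow> real"
    and m :: nat
    and c :: "real \<Rightarrow> nat \<Rightarrow> real"
  assumes maj: "majorana n cop"
    and t_anti: "antisym2 t"
    and U_anti: "antisym4 U"
    and m_lt: "m < n"
    and ode: "\<And>s i. s \<ge> 0 \<Longrightarrow> i < n \<Longrightarrow>
      ((\<lambda>r. c r i) has_real_derivative
         (2 * (\<Sum>(j,k,l)\<in>{(j,k,l). j < k \<and> k < l \<and> l < n \<and> j \<noteq> i \<and> k \<noteq> i \<and> l \<noteq> i}.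
                 \<bar>U i j k l\<bar> * (c s j + c s k + c s l))
          + 2 * (\<Sum>j<n. \<bar>t i j\<bar> * c s j))) (at s within {0..})"
    and init: "\<And>i. i < n \<Longrightarrow> c 0 i = (if i = m then 2 else 0)"
  shows "\<forall>s\<ge>0. \<forall>i<n.
    opnorm (anticomm (heis (hamiltonian n cop t U) s (cop i)) (cop m)) \<le> c s i"
proof -
  interpret dyn n cop t U m
    by unfold_locales (use maj m_lt in auto)
  define T where "T i = {(j,k,l). j < k \<and> k < l \<and> l < n \<and> j \<noteq> i \<and> k \<noteq> i \<and> l \<noteq> (i::nat)}" for i
  define F where "F y i = 2 * (\<Sum>(j,k,l)\<in>T i. \<bar>U i j k l\<bar> * (y j + y k + y l))
          + 2 * (\<Sum>j<n. \<bar>t i j\<bar> * y j)" for y :: "nat \<Rightarrow> real" and i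
  have key: "norm (X s i) \<le> c s i" if s: "s \<ge> 0" and i: "i < n" for s i
  proof (rule comparison[of n X "\<lambda>s i. alpha s (comm h (C i))" F c])
    show "((\<lambda>r. X r i) has_vector_derivative alpha s (comm h (C i))) (at s)" for s i
      by (rule X_deriv)
    show "norm (alpha s (comm h (C i))) \<le> F (\<lambda>j. norm (X s j)) i" if "s \<ge> 0" "i < n" for s i
      unfolding F_def T_def using bound[OF that(2) t_anti U_anti, of s] by simp
    show "((\<lambda>r. c r i) has_real_derivative F (c s) i) (at s within {0..})" if "s \<ge> 0" "i < n" for s i
      unfolding F_def T_def using ode[OF that] by simp
    show "norm (X 0 i) \<le> c 0 i" if "i < n" for i
    proof -
      have "X 0 i = C i * C m + C m * C i"
        unfolding X_def Y_def E_def E'_def by simp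
      also have "\<dots> = (if i = m then 2 else 0)" using C_ac[OF that m_lt] .
      finally show ?thesis using init[OF that] by simp
    qed
    show "F y i \<le> F y' i" if "i < n" "\<And>j. j < n \<Longrightarrow> y j \<le> y' j" for y y' i
    proof -
      have 1: "(\<Sum>(j,k,l)\<in>T i. \<bar>U i j k l\<bar> * (y j + y k + y l)) \<le> (\<Sum>(j,k,l)\<in>T i. \<bar>U i j k l\<bar> * (y' j + y' k + y' l))"
        by (rule sum_mono) (auto simp: T_def intro!: mult_left_mono add_mono that(2))
      have 2: "(\<Sum>j<n. \<bar>t i j\<bar> * y j) \<le> (\<Sum>j<n. \<bar>t i j\<bar> * y' j)"
        by (rule sum_mono) (auto intro!: mult_left_mono that(2))
      show ?thesis unfolding F_def using 1 2 by linarith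
    qed
    show "F (\<lambda>j. y j + e) i = F y i + e * F (\<lambda>j. 1) i" if "i < n" for y e i
    proof -
      have 1: "(\<Sum>(j,k,l)\<in>T i. \<bar>U i j k l\<bar> * ((y j + e) + (y k + e) + (y l + e))) =
          (\<Sum>(j,k,l)\<in>T i. \<bar>U i j k l\<bar> * (y j + y k + y l)) + e * (\<Sum>(j,k,l)\<in>T i. \<bar>U i j k l\<bar> * (1 + 1 + 1))"
        using lin_sum[of "\<lambda>p. \<bar>U i (fst p) (fst (snd p)) (snd (snd p))\<bar>"
            "\<lambda>p. y (fst p) + y (fst (snd p)) + y (snd (snd p))" e "\<lambda>p. 1 + 1 + 1" "T i"]
        by (simp add: case_prod_beta algebra_simps)
      have 2: "(\<Sum>j<n. \<bar>t i j\<bar> * (y j + e)) = (\<Sum>j<n. \<bar>t i j\<bar> * y j) + e * (\<Sum>j<n. \<bar>t i j\<bar> * 1)"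
        using lin_sum[of "\<lambda>j. \<bar>t i j\<bar>" y e "\<lambda>j. 1" "{..<n}"] by simp
      show ?thesis unfolding F_def using 1 2 by (simp add: algebra_simps)
    qed
    show "F (\<lambda>j. 1) i \<ge> 0" if "i < n" for i
      unfolding F_def by (intro add_nonneg_nonneg mult_nonneg_nonneg sum_nonneg) (auto simp: case_prod_beta)
  qed (use s i in auto)
  show ?thesis
  proof (intro allI impI)
    fix s :: real and i assume s: "s \<ge> 0" and i: "i < n"
    have "opnorm (anticomm (heis (hamiltonian n cop t U) s (cop i)) (cop m)) = norm (X s i)"
      unfolding opnorm_Phi anticomm_def Phi_plus Phi_mult heis_Phi X_def Y_def ..
    then show "opnorm (anticomm (heis (hamiltonian n cop t U) s (cop i)) (cop m)) \<le> c s i"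
      using key[OF s i] by simp
  qed
qed

end
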